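(* Let $\mathbb{S}\in\mathbb{Z}^{N_X\times N_e}$, let $\mathbb{V}\in\mathbb{R}^{N_e\times N_z}$ be a matrix whose columns form a basis of $\mathrm{Ker}\,\mathbb{S}$, and let $\Psi^*_x$ be a dissipation function on $\mathbb{R}^{N_e}$ (for a fixed $x$). For a given $\zeta\in\mathrm{Im}\,\mathbb{V}^T=\mathbb{R}^{N_z}$, define $$f^\lozenge(x,\zeta):=\arg\min_{f\in\mathbb{R}^{N_e}}\Psi^*_x(f)\quad\text{subject to } \mathbb{V}^Tf=\zeta.$$ Then $f^\lozenge(x,\zeta)$ is a steady (zero-velocity) force: $j^\lozenge:=\nabla\Psi^*_x(f^\lozenge(x,\zeta))$ satisfies $\mathbb{S}j^\lozenge=0$.
   Context: A dissipation function on $\mathbb{R}^{N_e}$ is a strictly convex, continuously differentiable, $1$-coercive ($\psi(f)/\|f\|\to\infty$ as $\|f\|\to\infty$), even function $\psi$ with $\psi(0)=0$. Note $\mathrm{Ker}\,\mathbb{V}^T=\mathrm{Im}\,\mathbb{S}^T$ and $\mathrm{Im}\,\mathbb{V}=\mathrm{Ker}\,\mathbb{S}$. *)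

theory Defs
  imports "HOL-Analysis.Analysis"
begin

definition strictly_convex_on :: "'a::real_vector set \<Rightarrow> ('a \<Rightarrow> real) \<Rightarrow> bool" where
  "strictly_convex_on A f \<longleftrightarrow> convex A \<and>
     (\<forall>x\<in>A. \<forall>y\<in>A. x \<noteq> y \<longrightarrow> (\<forall>t::real. 0 < t \<and> t < 1 \<longrightarrow>
        f ((1 - t) *\<^sub>R x + t *\<^sub>R y) < (1 - t) * f x + t * f y))"

definition dissipation_function :: "('a::euclidean_space \<Rightarrow> real) \<Rightarrow> bool" where
  "dissipation_function \<psi> \<longleftrightarrow>
     strictly_convex_on UNIV \<psi> \<and>
     (\<exists>g. continuous_on UNIV g \<and> (\<forall>f. GDERIV \<psi> f :> g f)) \<and>
     filterlim (\<lambda>f. \<psi> f / norm f) at_top at_infinity \<and>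
     (\<forall>f. \<psi> (- f) = \<psi> f) \<and>
     \<psi> 0 = 0"

end

theory Submission
  imports Defs
begin

lemma tV_comp: "(transpose V *v q) $ j = column j V \<bullet> (q :: real ^ 'e)"
  for V :: "real ^ 'z ^ 'e"
  by (simp add: matrix_vector_mult_def transpose_def column_def inner_vec_def mult.commute)

theorem mainTheorem11:
  fixes S :: "real ^ 'e ^ 'x" and V :: "real ^ 'z ^ 'e"
    and \<Psi> :: "real ^ 'e \<Rightarrow> real" and grad :: "real ^ 'e \<Rightarrow> real ^ 'e"
    and \<zeta> :: "real ^ 'z" and f0 :: "real ^ 'e"
  assumes S_int: "\<forall>i j. S $ i $ j \<in> \<int>"
    and V_indep: "independent (columns V)"
    and V_inj: "inj (\<lambda>j. column j V)"
    and V_span: "span (columns V) = {v. S *v v = 0}"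
    and diss: "dissipation_function \<Psi>"
    and grad: "\<forall>f. GDERIV \<Psi> f :> grad f"
    and f0_feas: "transpose V *v f0 = \<zeta>"
    and f0_min: "\<forall>f. transpose V *v f = \<zeta> \<longrightarrow> \<Psi> f0 \<le> \<Psi> f"
  shows "S *v grad f0 = 0"
proof -
  define g where "g = grad f0"
  have orth: "g \<bullet> h = 0" if hV: "transpose V *v h = 0" for h
  proof -
    have d0: "(\<Psi> has_derivative (\<lambda>k. k \<bullet> g)) (at f0)"
      using grad unfolding gderiv_def g_def by blast
    have d1: "((\<lambda>t::real. f0 + t *\<^sub>R h) has_derivative (\<lambda>t. t *\<^sub>R h)) (at 0)"
      by (auto intro!: derivative_eq_intros)
    have d2: "((\<lambda>t::real. \<Psi> (f0 + t *\<^sub>R h)) has_derivative (\<lambda>t. (t *\<^sub>R h) \<bullet> g)) (at 0)"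
    proof -
      have d0': "(\<Psi> has_derivative (\<lambda>k. k \<bullet> g)) (at (f0 + 0 *\<^sub>R h))" using d0 by simp
      show ?thesis using has_derivative_compose[OF d1 d0'] by simp
    qed
    have mn: "eventually (\<lambda>t. \<Psi> (f0 + 0 *\<^sub>R h) \<le> \<Psi> (f0 + t *\<^sub>R h)) (at (0::real))"
    proof (rule always_eventually, intro allI)
      fix t :: real
      have "transpose V *v (f0 + t *\<^sub>R h) = \<zeta>"
        using f0_feas hV by (simp add: matrix_vector_right_distrib matrix_vector_mult_scaleR)
      then show "\<Psi> (f0 + 0 *\<^sub>R h) \<le> \<Psi> (f0 + t *\<^sub>R h)" using f0_min by simp
    qed
    have "(\<lambda>t::real. (t *\<^sub>R h) \<bullet> g) = (\<lambda>t. 0)"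
      by (rule has_derivative_local_min[OF d2 mn])
    then have "(1 *\<^sub>R h) \<bullet> g = 0" by meson
    then show ?thesis by (simp add: inner_commute)
  qed
  obtain y z where y: "y \<in> span (columns V)"
    and z: "\<And>w. w \<in> span (columns V) \<Longrightarrow> orthogonal z w" and gyz: "g = y + z"
    using orthogonal_subspace_decomp_exists by blast
  have "transpose V *v z = 0"
  proof (rule vec_eq_iff[THEN iffD2], intro allI)
    fix j
    have "column j V \<in> span (columns V)"
      by (auto simp: columns_def intro: span_base)
    then have "column j V \<bullet> z = 0" using z by (metis orthogonal_def inner_commute)
    then show "(transpose V *v z) $ j = 0 $ j" by (metis tV_comp zero_index)
  qed
  then have "g \<bullet> z = 0" by (rule orth)
  moreover have "y \<bullet> z = 0" using z[OF y] by (simp add: orthogonal_def inner_commute)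
  ultimately have "z \<bullet> z = 0" using gyz by (simp add: inner_add_left)
  then have "z = 0" by simp
  then have "g \<in> span (columns V)" using gyz y by simp
  then show ?thesis using V_span g_def by simp
qed

end
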